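(* Let $w \in \mathfrak{S}_n$ and let $i \in \textsf{supp}(w)$ be such that the letter $i$ appears exactly once in every reduced word of $w$. Then deleting the letter $i$ from any reduced word of $w$ yields a word that is still reduced, and all words obtained in this way (from all reduced words of $w$) are reduced words of one and the same permutation $v$.
   Context: $\sigma_i$ ($1\le i\le n-1$) is the simple transposition swapping $i$ and $i+1$; products are compositions of maps. A reduced word of $w$ is a word $i_1\cdots i_\ell$ of minimal length $\ell=\ell(w)$ with $w=\sigma_{i_1}\cdots\sigma_{i_\ell}$; a word is reduced if it is a reduced word of the permutation it represents. $\textsf{supp}(w)$ is the set of letters appearing in (any) reduced word of $w$. *)

theory Defs
  imports "HOL-Combinatorics.Combinatorics"
begin

definition stransp :: "nat \<Rightarrow> nat \<Rightarrow> nat" where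
  "stransp i = transpose i (Suc i)"

definition word_perm :: "nat list \<Rightarrow> nat \<Rightarrow> nat" where
  "word_perm ws = foldr (\<lambda>i p. stransp i \<circ> p) ws id"

definition is_word :: "nat \<Rightarrow> nat list \<Rightarrow> bool" where
  "is_word n ws \<longleftrightarrow> set ws \<subseteq> {1..<n}"

definition reduced_word :: "nat \<Rightarrow> (nat \<Rightarrow> nat) \<Rightarrow> nat list \<Rightarrow> bool" where
  "reduced_word n w ws \<longleftrightarrow> is_word n ws \<and> word_perm ws = w \<and>
     (\<forall>ws'. is_word n ws' \<and> word_perm ws' = w \<longrightarrow> length ws \<le> length ws')"

definition is_reduced :: "nat \<Rightarrow> nat list \<Rightarrow> bool" where
  "is_reduced n ws \<longleftrightarrow> reduced_word n (word_perm ws) ws"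

definition supp :: "nat \<Rightarrow> (nat \<Rightarrow> nat) \<Rightarrow> nat set" where
  "supp n w = {i. \<exists>ws. reduced_word n w ws \<and> i \<in> set ws}"

end

theory Submission
  imports Defs
begin

definition invset :: "nat \<Rightarrow> (nat \<Rightarrow> nat) \<Rightarrow> (nat \<times> nat) set" where
  "invset n x = {(a,b). a \<in> {1..n} \<and> b \<in> {1..n} \<and> a < b \<and> x b < x a}"

definition ninv :: "nat \<Rightarrow> (nat \<Rightarrow> nat) \<Rightarrow> nat" where
  "ninv n x = card (invset n x)"

lemma finite_invset: "finite (invset n x)"
  by (rule finite_subset[of _ "{1..n} \<times> {1..n}"]) (auto simp: invset_def)

lemma ninv_id: "ninv n id = 0"
proof -
  have "invset n id = {}" by (auto simp: invset_def)
  then show ?thesis by (simp add: ninv_def)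
qed

lemma stransp_permutes: "1 \<le> j \<Longrightarrow> j < n \<Longrightarrow> stransp j permutes {1..n}"
  unfolding stransp_def by (rule permutes_swap_id) auto

lemma stransp_invol[simp]: "stransp j \<circ> stransp j = id"
  by (simp add: stransp_def)

lemma stransp_invol'[simp]: "x \<circ> stransp j \<circ> stransp j = x"
  by (simp add: o_assoc[symmetric])

lemma word_perm_Nil[simp]: "word_perm [] = id"
  by (simp add: word_perm_def)

lemma word_perm_Cons[simp]: "word_perm (j # ws) = stransp j \<circ> word_perm ws"
  by (simp add: word_perm_def)

lemma word_perm_append[simp]: "word_perm (xs @ ys) = word_perm xs \<circ> word_perm ys"
  by (induction xs) (auto simp: o_assoc)

lemma word_perm_snoc: "word_perm (xs @ [j]) = word_perm xs \<circ> stransp j"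
  by simp

lemma is_word_append[simp]: "is_word n (xs @ ys) \<longleftrightarrow> is_word n xs \<and> is_word n ys"
  by (auto simp: is_word_def)

lemma is_word_Cons[simp]: "is_word n (j # ys) \<longleftrightarrow> j \<in> {1..<n} \<and> is_word n ys"
  by (auto simp: is_word_def)

lemma is_word_Nil[simp]: "is_word n []"
  by (auto simp: is_word_def)

lemma word_perm_permutes: "is_word n ws \<Longrightarrow> word_perm ws permutes {1..n}"
proof (induction ws)
  case Nil then show ?case by (simp only: word_perm_Nil) (rule permutes_id)
next
  case (Cons j ws)
  then have "stransp j \<circ> word_perm ws permutes {1..n}"
    by (intro permutes_compose stransp_permutes) auto
  then show ?case by (simp only: word_perm_Cons)
qed

lemma stransp_mono:
  assumes "a < b" "(a,b) \<noteq> (j, Suc j)"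
  shows "stransp j a < stransp j b"
  using assms by (auto simp: stransp_def transpose_def)

lemma ninv_swap:
  assumes x: "x permutes {1..n}" and j: "1 \<le> j" "j < n"
  shows "x (Suc j) < x j \<Longrightarrow> ninv n (x \<circ> stransp j) + 1 = ninv n x"
    and "x j < x (Suc j) \<Longrightarrow> ninv n (x \<circ> stransp j) = ninv n x + 1"
proof -
  let ?s = "stransp j"
  let ?f = "\<lambda>(a,b). (?s a, ?s b)"
  let ?A = "invset n x - {(j, Suc j)}"
  let ?B = "invset n (x \<circ> ?s) - {(j, Suc j)}"
  have ss: "\<And>a. ?s (?s a) = a" by (simp add: stransp_def)
  have sin: "\<And>a. ?s a \<in> {1..n} \<longleftrightarrow> a \<in> {1..n}"
    using j by (auto simp: stransp_def transpose_def)
  have fAB: "?f ` ?A \<subseteq> ?B"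
  proof
    fix z assume "z \<in> ?f ` ?A"
    then obtain a b where z: "z = (?s a, ?s b)" and ab: "(a,b) \<in> ?A" by auto
    have "?s a < ?s b" using ab stransp_mono[of a b j] by (auto simp: invset_def)
    moreover have "(?s a, ?s b) \<noteq> (j, Suc j)"
      using ab ss by (auto simp: invset_def stransp_def transpose_def split: if_splits)
    ultimately show "z \<in> ?B" using ab z sin ss by (auto simp: invset_def)
  qed
  have fBA: "?f ` ?B \<subseteq> ?A"
  proof
    fix z assume "z \<in> ?f ` ?B"
    then obtain a b where z: "z = (?s a, ?s b)" and ab: "(a,b) \<in> ?B" by auto
    have "?s a < ?s b" using ab stransp_mono[of a b j] by (auto simp: invset_def)
    moreover have "(?s a, ?s b) \<noteq> (j, Suc j)"
      using ab ss by (auto simp: invset_def stransp_def transpose_def split: if_splits)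
    ultimately show "z \<in> ?A" using ab z sin ss by (auto simp: invset_def)
  qed
  have inj: "inj ?f" by (auto simp: inj_def) (metis ss)+
  have "card ?A \<le> card ?B"
    using card_inj_on_le[OF inj_on_subset[OF inj subset_UNIV] fAB] finite_invset by auto
  moreover have "card ?B \<le> card ?A"
    using card_inj_on_le[OF inj_on_subset[OF inj subset_UNIV] fBA] finite_invset by auto
  ultimately have eq: "card ?A = card ?B" by simp
  have jin: "j \<in> {1..n}" "Suc j \<in> {1..n}" using j by auto
  have sj: "?s j = Suc j" "?s (Suc j) = j" by (auto simp: stransp_def)
  show "x (Suc j) < x j \<Longrightarrow> ninv n (x \<circ> stransp j) + 1 = ninv n x"
  proof -
    assume h: "x (Suc j) < x j"
    have "(j, Suc j) \<in> invset n x" using h jin by (auto simp: invset_def)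
    moreover have "(j, Suc j) \<notin> invset n (x \<circ> ?s)" using h sj by (auto simp: invset_def)
    moreover have "card (invset n x) > 0"
      using calculation finite_invset card_gt_0_iff by blast
    ultimately show ?thesis using eq finite_invset
      by (simp add: ninv_def card_Diff_singleton)
  qed
  show "x j < x (Suc j) \<Longrightarrow> ninv n (x \<circ> stransp j) = ninv n x + 1"
  proof -
    assume h: "x j < x (Suc j)"
    have "(j, Suc j) \<notin> invset n x" using h jin by (auto simp: invset_def)
    moreover have "(j, Suc j) \<in> invset n (x \<circ> ?s)" using h sj jin by (auto simp: invset_def)
    moreover have "card (invset n (x \<circ> ?s)) > 0"
      using calculation finite_invset card_gt_0_iff by blast
    ultimately show ?thesis using eq finite_invset
      by (simp add: ninv_def card_Diff_singleton)
  qed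
qed

lemma ninv_le_step:
  assumes x: "x permutes {1..n}" and j: "1 \<le> j" "j < n"
  shows "ninv n (x \<circ> stransp j) \<le> ninv n x + 1"
proof -
  have "x j \<noteq> x (Suc j)" using permutes_inj[OF x] unfolding inj_def by (metis n_not_Suc_n)
  then consider "x (Suc j) < x j" | "x j < x (Suc j)" by linarith
  then show ?thesis using ninv_swap[OF x j] by cases auto
qed

lemma ninv_comp_word:
  assumes x: "x permutes {1..n}" and w: "is_word n ys"
  shows "ninv n (x \<circ> word_perm ys) \<le> ninv n x + length ys"
  using w
proof (induction ys rule: rev_induct)
  case Nil then show ?case by simp
next
  case (snoc j ys)
  have p: "x \<circ> word_perm ys permutes {1..n}"
    using snoc by (intro permutes_compose word_perm_permutes x) auto
  have eq: "x \<circ> word_perm (ys @ [j]) = (x \<circ> word_perm ys) \<circ> stransp j"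
    by (simp add: o_assoc)
  have a: "ninv n ((x \<circ> word_perm ys) \<circ> stransp j) \<le> ninv n (x \<circ> word_perm ys) + 1"
    using snoc by (intro ninv_le_step p) auto
  have b: "ninv n (x \<circ> word_perm ys) \<le> ninv n x + length ys" using snoc by (simp add: comp_def)
  have c: "length (ys @ [j]) = length ys + 1" by simp
  show ?case unfolding eq c using a b by linarith
qed

lemma ninv_word: "is_word n ws \<Longrightarrow> ninv n (word_perm ws) \<le> length ws"
  using ninv_comp_word[OF permutes_id, of n ws] by (simp add: ninv_id)

lemma no_descent_id:
  assumes x: "x permutes {1..n}" and h: "\<And>j. 1 \<le> j \<Longrightarrow> j < n \<Longrightarrow> x j < x (Suc j)"
  shows "x = id"
proof -
  have inS: "\<And>m. m \<in> {1..n} \<Longrightarrow> x m \<in> {1..n}" using permutes_in_image[OF x] by auto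
  have ge: "m \<le> n \<Longrightarrow> 1 \<le> m \<Longrightarrow> m \<le> x m" for m
  proof (induction m)
    case 0 then show ?case by simp
  next
    case (Suc m)
    show ?case
    proof (cases "m = 0")
      case True then show ?thesis using inS[of 1] Suc by auto
    next
      case False then show ?thesis using Suc h[of m] by auto
    qed
  qed
  have le: "d < n \<Longrightarrow> x (n - d) \<le> n - d" for d
  proof (induction d)
    case 0 then show ?case using inS[of n] by auto
  next
    case (Suc d)
    have "x (n - Suc d) < x (Suc (n - Suc d))" using h[of "n - Suc d"] Suc by auto
    moreover have "Suc (n - Suc d) = n - d" using Suc by auto
    ultimately show ?case using Suc by auto
  qed
  show ?thesis
  proof
    fix m
    show "x m = id m"
    proof (cases "m \<in> {1..n}")
      case True
      then have "x m \<le> m" using le[of "n - m"] by auto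
      then show ?thesis using ge[of m] True by auto
    next
      case False then show ?thesis using permutes_not_in[OF x] by auto
    qed
  qed
qed

lemma exists_word:
  "x permutes {1..n} \<Longrightarrow> \<exists>ws. is_word n ws \<and> word_perm ws = x \<and> length ws = ninv n x"
proof (induction "ninv n x" arbitrary: x rule: less_induct)
  case less
  show ?case
  proof (cases "x = id")
    case True then show ?thesis by (intro exI[of _ "[]"]) (auto simp: ninv_id)
  next
    case False
    then obtain j where j: "1 \<le> j" "j < n" and d: "\<not> x j < x (Suc j)"
      using no_descent_id[OF less.prems] by blast
    have "x j \<noteq> x (Suc j)" using permutes_inj[OF less.prems] unfolding inj_def by (metis n_not_Suc_n)
    then have d: "x (Suc j) < x j" using d by linarith
    have e: "ninv n (x \<circ> stransp j) + 1 = ninv n x" using ninv_swap(1)[OF less.prems j d] .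
    have p: "x \<circ> stransp j permutes {1..n}" by (intro permutes_compose stransp_permutes less.prems j)
    obtain ws where ws: "is_word n ws" "word_perm ws = x \<circ> stransp j" "length ws = ninv n (x \<circ> stransp j)"
      using less.hyps[OF _ p] e by auto
    show ?thesis
      by (rule exI[of _ "ws @ [j]"]) (use ws e j in auto)
  qed
qed

lemma reduced_word_iff:
  assumes "x permutes {1..n}"
  shows "reduced_word n x ws \<longleftrightarrow> is_word n ws \<and> word_perm ws = x \<and> length ws = ninv n x"
proof
  assume r: "reduced_word n x ws"
  obtain ws' where "is_word n ws'" "word_perm ws' = x" "length ws' = ninv n x"
    using exists_word[OF assms] by blast
  then show "is_word n ws \<and> word_perm ws = x \<and> length ws = ninv n x"
    using r ninv_word[of n ws] unfolding reduced_word_def by force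
next
  assume "is_word n ws \<and> word_perm ws = x \<and> length ws = ninv n x"
  then show "reduced_word n x ws"
    unfolding reduced_word_def using ninv_word by fastforce
qed

lemma is_reduced_iff:
  "is_reduced n ws \<longleftrightarrow> is_word n ws \<and> length ws = ninv n (word_perm ws)"
proof
  assume "is_reduced n ws"
  then have "is_word n ws" by (simp add: is_reduced_def reduced_word_def)
  then show "is_word n ws \<and> length ws = ninv n (word_perm ws)"
    using \<open>is_reduced n ws\<close> reduced_word_iff[OF word_perm_permutes] by (simp add: is_reduced_def)
next
  assume "is_word n ws \<and> length ws = ninv n (word_perm ws)"
  then show "is_reduced n ws"
    using reduced_word_iff[OF word_perm_permutes] by (simp add: is_reduced_def)
qed

lemma is_reduced_prefix:
  assumes "is_reduced n (xs @ ys)" shows "is_reduced n xs"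
proof -
  have w: "is_word n xs" "is_word n ys" using assms by (auto simp: is_reduced_iff)
  have "length xs + length ys = ninv n (word_perm xs \<circ> word_perm ys)"
    using assms by (simp add: is_reduced_iff)
  also have "\<dots> \<le> ninv n (word_perm xs) + length ys"
    by (rule ninv_comp_word[OF word_perm_permutes[OF w(1)] w(2)])
  finally show ?thesis using ninv_word[OF w(1)] w by (simp add: is_reduced_iff)
qed

lemma stransp_block: "j \<noteq> i \<Longrightarrow> (stransp j m \<le> i \<longleftrightarrow> m \<le> i)"
  by (auto simp: stransp_def transpose_def)

lemma word_block: "i \<notin> set ws \<Longrightarrow> (word_perm ws m \<le> i \<longleftrightarrow> m \<le> i)"
  by (induction ws arbitrary: m) (auto simp: stransp_block)

definition c1 :: "nat \<Rightarrow> nat \<Rightarrow> (nat \<Rightarrow> nat) \<Rightarrow> nat \<Rightarrow> nat \<Rightarrow> bool" where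
  "c1 n i x p q \<longleftrightarrow> 1 \<le> p \<and> p \<le> i \<and> i < q \<and> q \<le> n \<and> i < x p \<and> x q \<le> i \<and>
     (\<forall>m. 1 \<le> m \<and> m \<le> i \<and> m \<noteq> p \<longrightarrow> x m \<le> i) \<and>
     (\<forall>m. i < m \<and> m \<le> n \<and> m \<noteq> q \<longrightarrow> i < x m)"

definition GG :: "nat \<Rightarrow> nat \<Rightarrow> (nat \<Rightarrow> nat) \<Rightarrow> bool" where
  "GG n i x \<longleftrightarrow> (\<exists>ws. reduced_word n x ws \<and> 2 \<le> count_list ws i)"

lemma G_ext:
  assumes x: "x permutes {1..n}" and j: "1 \<le> j" "j < n"
    and e: "ninv n (x \<circ> stransp j) = ninv n x + 1" and g: "GG n i x"
  shows "GG n i (x \<circ> stransp j)"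
proof -
  obtain ws where ws: "reduced_word n x ws" "2 \<le> count_list ws i" using g by (auto simp: GG_def)
  have p: "x \<circ> stransp j permutes {1..n}" by (intro permutes_compose stransp_permutes x j)
  have "reduced_word n (x \<circ> stransp j) (ws @ [j])"
    using ws(1) e j unfolding reduced_word_iff[OF x] reduced_word_iff[OF p] by auto
  then show ?thesis using ws(2) unfolding GG_def by (intro exI[of _ "ws @ [j]"]) auto
qed

lemma G_desc:
  assumes x: "x permutes {1..n}" and j: "1 \<le> j" "j < n"
    and d: "x (Suc j) < x j" and g: "GG n i (x \<circ> stransp j)"
  shows "GG n i x"
proof -
  have p: "x \<circ> stransp j permutes {1..n}" by (intro permutes_compose stransp_permutes x j)
  have e: "ninv n (x \<circ> stransp j) + 1 = ninv n x" using ninv_swap(1)[OF x j d] .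
  have "GG n i ((x \<circ> stransp j) \<circ> stransp j)"
    by (rule G_ext[OF p j _ g]) (use e in simp)
  then show ?thesis by simp
qed

lemma G_end:
  assumes x: "x permutes {1..n}" and i: "1 \<le> i" "i < n"
    and d: "x (Suc i) < x i" and m: "\<not> ((x \<circ> stransp i) m \<le> i \<longleftrightarrow> m \<le> i)"
  shows "GG n i x"
proof -
  have p: "x \<circ> stransp i permutes {1..n}" by (intro permutes_compose stransp_permutes x i)
  have e: "ninv n (x \<circ> stransp i) + 1 = ninv n x" using ninv_swap(1)[OF x i d] .
  obtain ws where ws: "is_word n ws" "word_perm ws = x \<circ> stransp i" "length ws = ninv n (x \<circ> stransp i)"
    using exists_word[OF p] by blast
  have "i \<in> set ws" using word_block[of i ws m] ws(2) m by auto
  then have c: "1 \<le> count_list ws i" using count_list_0_iff[of ws i] by linarith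
  have "reduced_word n x (ws @ [i])"
    using ws e i unfolding reduced_word_iff[OF x] by auto
  then show ?thesis using c unfolding GG_def by (intro exI[of _ "ws @ [i]"]) auto
qed

lemma inj_ne: "x permutes S \<Longrightarrow> a \<noteq> b \<Longrightarrow> x a \<noteq> x b"
  using permutes_inj unfolding inj_def by metis

lemma comp_s_apply: "(x \<circ> stransp j) m = x (if m = j then Suc j else if m = Suc j then j else m)"
  by (simp add: stransp_def transpose_def)

lemma bad_G:
  assumes "x permutes {1..n}" "1 \<le> i" "i < n" "c1 n i x p q" "p < k" "k < q" "x q < x k" "x k < x p"
  shows "GG n i x"
  using assms
proof (induction "ninv n x + (if k \<le> i then (i-k)+(q - Suc i) else (k - Suc i)+(i-p))"
    arbitrary: x p q k rule: less_induct)
  case less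
  note x = less.prems(1) and i = less.prems(2,3) and c = less.prems(4)
  note c' = c[unfolded c1_def]
  show ?case
  proof (cases "k \<le> i")
    case kle: True
    have xk: "x k \<le> i" using c' kle less.prems(5) by auto
    show ?thesis
    proof (cases "k < i")
      case True
      have xk1: "x (Suc k) \<le> i" using c' True less.prems(5) by auto
      have ne: "x (Suc k) \<noteq> x k" using inj_ne[OF x] by simp
      show ?thesis
      proof (cases "x (Suc k) < x k")
        case True
        have j: "1 \<le> k" "k < n" using c' \<open>k < i\<close> less.prems(5) by auto
        let ?x = "x \<circ> stransp k"
        have p: "?x permutes {1..n}" by (intro permutes_compose stransp_permutes x j)
        have e: "ninv n ?x + 1 = ninv n x" using ninv_swap(1)[OF x j True] .
        have c2: "c1 n i ?x p q"
          using c' \<open>k < i\<close> less.prems(5) unfolding c1_def comp_s_apply by auto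
        have "GG n i ?x"
          apply (rule less.hyps[of ?x "Suc k" q p])
          using e kle \<open>k < i\<close> less.prems(5-8) c' p i c2 unfolding comp_s_apply by auto
        then show ?thesis by (rule G_desc[OF x j True])
      next
        case False
        then have "x k < x (Suc k)" using ne by linarith
        have "x (Suc k) < x p" using xk1 c' by linarith
        show ?thesis
          apply (rule less.hyps[of x "Suc k" q p, OF _ x i(1) i(2) c _ _ _ \<open>x (Suc k) < x p\<close>])
          using \<open>x k < x (Suc k)\<close> kle \<open>k < i\<close> less.prems(5-8) c' x i c xk1 by auto
      qed
    next
      case False
      then have ki: "k = i" using kle by simp
      show ?thesis
      proof (cases "q = Suc i")
        case True
        show ?thesis
          apply (rule G_end[OF x i, of p])
          using True ki less.prems(5-8) c' unfolding comp_s_apply by auto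
      next
        case False
        have "i < q - 1" "q - 1 \<le> n" "q - 1 \<noteq> q" using c' False by auto
        then have xq1: "i < x (q - 1)" using c' by blast
        define j where "j = q - 1"
        have j: "1 \<le> j" "j < n" "Suc j = q" using c' False j_def by auto
        have d: "x (Suc j) < x j" using j xq1 xk less.prems(7) j_def by auto
        let ?x = "x \<circ> stransp j"
        have p: "?x permutes {1..n}" by (intro permutes_compose stransp_permutes x j)
        have e: "ninv n ?x + 1 = ninv n x" using ninv_swap(1)[OF x j(1,2) d] .
        have c2: "c1 n i ?x p j"
          using c' False j ki less.prems(5) unfolding c1_def comp_s_apply by auto
        have "GG n i ?x"
          apply (rule less.hyps[of ?x k j p])
          using e kle ki False j less.prems(5-8) c' p i c2 unfolding comp_s_apply by auto
        then show ?thesis by (rule G_desc[OF x j(1,2) d])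
      qed
    qed
  next
    case kgt: False
    have xk: "i < x k" using c' kgt less.prems(6) by auto
    show ?thesis
    proof (cases "Suc i < k")
      case True
      have "i < k - 1" "k - 1 \<le> n" "k - 1 \<noteq> q" using c' True less.prems(6) by auto
      then have xk1: "i < x (k - 1)" using c' by blast
      have ne: "x (k - 1) \<noteq> x k" using inj_ne[OF x] True by simp
      define j where "j = k - 1"
      have j: "1 \<le> j" "j < n" "Suc j = k" using c' True j_def less.prems(6) by auto
      show ?thesis
      proof (cases "x k < x (k - 1)")
        case True
        have d: "x (Suc j) < x j" using True j j_def by simp
        let ?x = "x \<circ> stransp j"
        have p: "?x permutes {1..n}" by (intro permutes_compose stransp_permutes x j)
        have e: "ninv n ?x + 1 = ninv n x" using ninv_swap(1)[OF x j(1,2) d] .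
        have c2: "c1 n i ?x p q"
          using c' \<open>Suc i < k\<close> j less.prems(6) unfolding c1_def comp_s_apply by auto
        have "GG n i ?x"
          apply (rule less.hyps[of ?x j q p])
          using e kgt \<open>Suc i < k\<close> j less.prems(5-8) c' p i c2 unfolding comp_s_apply by auto
        then show ?thesis by (rule G_desc[OF x j(1,2) d])
      next
        case False
        then have "x (k - 1) < x k" using ne by linarith
        show ?thesis
          apply (rule less.hyps[of x "k - 1" q p])
          using \<open>x (k - 1) < x k\<close> kgt \<open>Suc i < k\<close> less.prems(5-8) c' x i c xk1 by auto
      qed
    next
      case False
      then have ki: "k = Suc i" using kgt by simp
      show ?thesis
      proof (cases "p = i")
        case True
        show ?thesis
          apply (rule G_end[OF x i, of q])
          using True ki less.prems(5-8) c' unfolding comp_s_apply by auto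
      next
        case False
        have xp1: "x (Suc p) \<le> i" using c' False by auto
        have j: "1 \<le> p" "p < n" using c' i by auto
        have d: "x (Suc p) < x p" using xp1 c' by auto
        let ?x = "x \<circ> stransp p"
        have p: "?x permutes {1..n}" by (intro permutes_compose stransp_permutes x j)
        have e: "ninv n ?x + 1 = ninv n x" using ninv_swap(1)[OF x j d] .
        have c2: "c1 n i ?x (Suc p) q"
          using c' False ki less.prems(6) unfolding c1_def comp_s_apply by auto
        have "GG n i ?x"
          apply (rule less.hyps[of ?x k q "Suc p"])
          using e kgt ki False less.prems(5-8) c' p i c2 unfolding comp_s_apply by auto
        then show ?thesis by (rule G_desc[OF x j d])
      qed
    qed
  qed
qed

lemma struct_c1:
  assumes U: "U permutes {1..n}" "\<And>m. U m \<le> i \<longleftrightarrow> m \<le> i"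
    and V: "V permutes {1..n}" "\<And>m. V m \<le> i \<longleftrightarrow> m \<le> i"
    and i: "1 \<le> i" "i < n" and vp: "V p = i" and vq: "V q = Suc i"
  shows "c1 n i (U \<circ> stransp i \<circ> V) p q"
proof -
  have pin: "p \<in> {1..n}" using permutes_in_image[OF V(1), of p] vp i by auto
  have qin: "q \<in> {1..n}" using permutes_in_image[OF V(1), of q] vq i by auto
  have pi: "p \<le> i" using V(2)[of p] vp by auto
  have qi: "i < q" using V(2)[of q] vq by auto
  have l: "U (V m) \<le> i" if "1 \<le> m" "m \<le> i" "m \<noteq> p" for m
  proof -
    have "V m \<noteq> i" using inj_ne[OF V(1) that(3)] vp by simp
    then show ?thesis using V(2)[of m] U(2)[of "V m"] that by auto
  qed
  have r: "i < U (V m)" if "i < m" "m \<le> n" "m \<noteq> q" for m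
  proof -
    have "V m \<noteq> Suc i" using inj_ne[OF V(1) that(3)] vq by simp
    then show ?thesis using V(2)[of m] U(2)[of "V m"] that by auto
  qed
  have s1: "stransp i (V m) = V m" if "V m \<noteq> i" "V m \<noteq> Suc i" for m
    using that by (simp add: stransp_def transpose_def)
  show ?thesis unfolding c1_def
  proof (intro conjI allI impI)
    show "1 \<le> p" "p \<le> i" "i < q" "q \<le> n" using pin qin pi qi by auto
    show "i < (U \<circ> stransp i \<circ> V) p" using vp U(2)[of "Suc i"] by (simp add: stransp_def)
    show "(U \<circ> stransp i \<circ> V) q \<le> i" using vq U(2)[of i] by (simp add: stransp_def)
  next
    fix m assume m: "1 \<le> m \<and> m \<le> i \<and> m \<noteq> p"
    have "V m \<noteq> i" using inj_ne[OF V(1)] m vp by metis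
    moreover have "V m \<noteq> Suc i" using V(2)[of m] m by auto
    ultimately show "(U \<circ> stransp i \<circ> V) m \<le> i" using s1[of m] l[of m] m by simp
  next
    fix m assume m: "i < m \<and> m \<le> n \<and> m \<noteq> q"
    have "V m \<noteq> Suc i" using inj_ne[OF V(1)] m vq by metis
    moreover have "V m \<noteq> i" using V(2)[of m] m by auto
    ultimately show "i < (U \<circ> stransp i \<circ> V) m" using s1[of m] r[of m] m by simp
  qed
qed

lemma part1:
  assumes i: "1 \<le> i" "i < n" and ia: "i \<notin> set a"
  shows "i \<notin> set b \<Longrightarrow> is_reduced n (a @ [i] @ b) \<Longrightarrow> \<not> GG n i (word_perm (a @ [i] @ b))
    \<Longrightarrow> is_reduced n (a @ b)"
proof (induction b rule: rev_induct)
  case Nil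
  then show ?case using is_reduced_prefix[of n a "[i]"] by simp
next
  case (snoc j b')
  have wa: "is_word n a" and wb: "is_word n b'" and j: "1 \<le> j" "j < n"
    using snoc.prems(2) by (auto simp: is_reduced_iff)
  have ji: "j \<noteq> i" and ib: "i \<notin> set b'" using snoc.prems(1) by auto
  define U where "U = word_perm a"
  define V where "V = word_perm b'"
  define x where "x = U \<circ> stransp i \<circ> V"
  define y where "y = U \<circ> V"
  have Up: "U permutes {1..n}" using word_perm_permutes[OF wa] U_def by simp
  have Vp: "V permutes {1..n}" using word_perm_permutes[OF wb] V_def by simp
  have Ub: "\<And>m. U m \<le> i \<longleftrightarrow> m \<le> i" using word_block[OF ia] U_def by simp
  have Vb: "\<And>m. V m \<le> i \<longleftrightarrow> m \<le> i" using word_block[OF ib] V_def by simp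
  have xp: "x permutes {1..n}" unfolding x_def
    by (intro permutes_compose stransp_permutes Up Vp) (use i in auto)
  have xw: "word_perm (a @ [i] @ b') = x" by (simp add: x_def U_def V_def o_assoc)
  have ww: "word_perm (a @ [i] @ b' @ [j]) = x \<circ> stransp j" by (simp add: x_def U_def V_def o_assoc)
  have rx: "is_reduced n (a @ [i] @ b')"
    using is_reduced_prefix[of n "a @ [i] @ b'" "[j]"] snoc.prems(2) by simp
  have lx: "length (a @ [i] @ b') = ninv n x" using rx xw by (simp add: is_reduced_iff)
  have lw: "length (a @ [i] @ b' @ [j]) = ninv n (x \<circ> stransp j)"
    using snoc.prems(2) ww by (simp add: is_reduced_iff)
  have e: "ninv n (x \<circ> stransp j) = ninv n x + 1" using lx lw by simp
  have ngw: "\<not> GG n i (x \<circ> stransp j)" using snoc.prems(3) unfolding ww by assumption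
  have ngx: "\<not> GG n i x" using G_ext[OF xp j e] ngw by blast
  have IH: "is_reduced n (a @ b')" using snoc.IH[OF ib rx] ngx unfolding xw by blast
  have asc: "x j < x (Suc j)"
  proof -
    have "x j \<noteq> x (Suc j)" using inj_ne[OF xp] by simp
    moreover have "\<not> x (Suc j) < x j" using ninv_swap(1)[OF xp j] e by auto
    ultimately show ?thesis by linarith
  qed
  obtain p' where vp: "V p' = i" using permutes_surj[OF Vp] by (metis surjD)
  obtain q' where vq: "V q' = Suc i" using permutes_surj[OF Vp] by (metis surjD)
  have c: "c1 n i x p' q'" unfolding x_def by (rule struct_c1[OF Up Ub Vp Vb i vp vq])
  note c' = c[unfolded c1_def]
  have s1: "stransp i (V m) = V m" if "m \<noteq> p'" "m \<noteq> q'" for m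
  proof -
    have "V m \<noteq> i" "V m \<noteq> Suc i" using inj_ne[OF Vp] that vp vq by metis+
    then show ?thesis by (simp add: stransp_def transpose_def)
  qed
  have yx: "y m = x m" if "m \<noteq> p'" "m \<noteq> q'" for m
    using s1[OF that] by (simp add: x_def y_def)
  have yp: "y p' = x q'" using vp vq by (simp add: x_def y_def stransp_def)
  have yq: "y q' = x p'" using vp vq by (simp add: x_def y_def stransp_def)
  have Vjp: "V \<circ> stransp j permutes {1..n}" by (intro permutes_compose stransp_permutes Vp j)
  have Vjb: "\<And>m. (V \<circ> stransp j) m \<le> i \<longleftrightarrow> m \<le> i" using Vb stransp_block[OF ji] by simp
  have wx: "U \<circ> stransp i \<circ> (V \<circ> stransp j) = x \<circ> stransp j" by (simp add: x_def o_assoc)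
  have yp': "y permutes {1..n}" unfolding y_def by (intro permutes_compose Up Vp)
  have asc_y: "y j < y (Suc j)"
  proof -
    consider "j = p'" | "Suc j = q'" | "Suc j = p'" | "j = q'"
      | "j \<noteq> p'" "j \<noteq> q'" "Suc j \<noteq> p'" "Suc j \<noteq> q'" by blast
    then show ?thesis
    proof cases
      case 1
      have "x (Suc j) \<le> i" using c' 1 ji by auto
      then show ?thesis using asc c' 1 by auto
    next
      case 2
      have "i < j" using c' 2 ji by auto
      then have "i < x j" using c' 2 by auto
      then show ?thesis using asc c' 2 by auto
    next
      case 3
      have jq: "j \<noteq> q'" "Suc j \<noteq> q'" using c' 3 by auto
      show ?thesis
      proof (rule ccontr)
        assume "\<not> y j < y (Suc j)"
        moreover have "x j \<noteq> x q'" using inj_ne[OF xp jq(1)] .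
        ultimately have lt: "x q' < x j" using yx[of j] yp 3 jq by auto
        have cw: "c1 n i (x \<circ> stransp j) j q'"
          unfolding wx[symmetric]
          by (rule struct_c1[OF Up Ub Vjp Vjb i]) (use vp vq 3 jq in \<open>auto simp: stransp_def\<close>)
        have "GG n i (x \<circ> stransp j)"
          by (rule bad_G[OF permutes_compose[OF stransp_permutes[OF j] xp] i cw, of "Suc j"])
             (use lt asc 3 jq c' in \<open>auto simp: stransp_def transpose_def\<close>)
        then show False using ngw by simp
      qed
    next
      case 4
      have jp: "j \<noteq> p'" "Suc j \<noteq> p'" using c' 4 by auto
      show ?thesis
      proof (rule ccontr)
        assume "\<not> y j < y (Suc j)"
        moreover have "x (Suc j) \<noteq> x p'" using inj_ne[OF xp jp(2)] by simp
        ultimately have lt: "x (Suc j) < x p'" using yx[of "Suc j"] yq 4 jp by auto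
        have cw: "c1 n i (x \<circ> stransp j) p' (Suc j)"
          unfolding wx[symmetric]
          by (rule struct_c1[OF Up Ub Vjp Vjb i]) (use vp vq 4 jp in \<open>auto simp: stransp_def\<close>)
        have "GG n i (x \<circ> stransp j)"
          by (rule bad_G[OF permutes_compose[OF stransp_permutes[OF j] xp] i cw, of j])
             (use lt asc 4 jp c' in \<open>auto simp: stransp_def transpose_def\<close>)
        then show False using ngw by simp
      qed
    next
      case 5
      then show ?thesis using yx asc by simp
    qed
  qed
  have "ninv n (y \<circ> stransp j) = ninv n y + 1" using ninv_swap(2)[OF yp' j asc_y] .
  moreover have "length (a @ b') = ninv n y" using IH by (simp add: is_reduced_iff y_def U_def V_def)
  moreover have "word_perm (a @ b' @ [j]) = y \<circ> stransp j" by (simp add: y_def U_def V_def o_assoc)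
  ultimately show ?case using wa wb j by (simp add: is_reduced_iff)
qed

lemma decomp_v:
  assumes i: "1 \<le> i" "i < n" and ia: "i \<notin> set a" and ib: "i \<notin> set b"
    and wa: "is_word n a" and wb: "is_word n b"
  shows "\<exists>p q. c1 n i (word_perm (a @ [i] @ b)) p q \<and>
           word_perm (a @ b) = word_perm (a @ [i] @ b) \<circ> transpose p q"
proof -
  define U where "U = word_perm a"
  define V where "V = word_perm b"
  have Up: "U permutes {1..n}" using word_perm_permutes[OF wa] U_def by simp
  have Vp: "V permutes {1..n}" using word_perm_permutes[OF wb] V_def by simp
  have Ub: "\<And>m. U m \<le> i \<longleftrightarrow> m \<le> i" using word_block[OF ia] U_def by simp
  have Vb: "\<And>m. V m \<le> i \<longleftrightarrow> m \<le> i" using word_block[OF ib] V_def by simp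
  obtain p where vp: "V p = i" using permutes_surj[OF Vp] by (metis surjD)
  obtain q where vq: "V q = Suc i" using permutes_surj[OF Vp] by (metis surjD)
  have eq: "word_perm (a @ [i] @ b) = U \<circ> stransp i \<circ> V" by (simp add: U_def V_def o_assoc)
  have c: "c1 n i (U \<circ> stransp i \<circ> V) p q" by (rule struct_c1[OF Up Ub Vp Vb i vp vq])
  have pq: "p \<noteq> q" using vp vq by auto
  have "U \<circ> V = U \<circ> stransp i \<circ> V \<circ> transpose p q"
  proof
    fix m
    show "(U \<circ> V) m = (U \<circ> stransp i \<circ> V \<circ> transpose p q) m"
    proof (cases "m = p \<or> m = q")
      case True then show ?thesis using vp vq pq by (auto simp: stransp_def)
    next
      case False
      have "V m \<noteq> i" "V m \<noteq> Suc i" using inj_ne[OF Vp] False vp vq by metis+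
      then show ?thesis using False by (simp add: stransp_def transpose_def)
    qed
  qed
  then show ?thesis using c eq by (intro exI[of _ p] exI[of _ q]) (simp add: U_def V_def)
qed

lemma split_once:
  assumes "count_list ws i = 1"
  shows "\<exists>a b. ws = a @ [i] @ b \<and> i \<notin> set a \<and> i \<notin> set b"
proof -
  obtain a b where "ws = a @ i # b" "i \<notin> set a" "count_list b i = 0"
    using count_list_Suc_split_first[of ws i 0] assms by auto
  then show ?thesis using count_list_0_iff by fastforce
qed

theorem corollary2p5:
  fixes n i :: nat and w :: "nat \<Rightarrow> nat"
  assumes "w permutes {1..n}"
    and "i \<in> supp n w"
    and "\<forall>ws. reduced_word n w ws \<longrightarrow> count_list ws i = 1"
  shows "(\<forall>ws. reduced_word n w ws \<longrightarrow> is_reduced n (removeAll i ws)) \<and>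
         (\<exists>v. \<forall>ws. reduced_word n w ws \<longrightarrow> reduced_word n v (removeAll i ws))"
proof -
  obtain ws0 where ws0: "reduced_word n w ws0" "i \<in> set ws0"
    using assms(2) by (auto simp: supp_def)
  have "is_word n ws0" using ws0(1) unfolding reduced_word_def by blast
  then have i: "1 \<le> i" "i < n" using ws0(2) unfolding is_word_def by auto
  have ng: "\<not> GG n i w"
  proof
    assume "GG n i w"
    then obtain ws where "reduced_word n w ws" "2 \<le> count_list ws i" by (auto simp: GG_def)
    then show False using assms(3) by auto
  qed
  define P where "P = (THE p. 1 \<le> p \<and> p \<le> i \<and> i < w p)"
  define Q where "Q = (THE q. i < q \<and> q \<le> n \<and> w q \<le> i)"
  have key: "is_reduced n (removeAll i ws) \<and> word_perm (removeAll i ws) = w \<circ> transpose P Q"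
    if r: "reduced_word n w ws" for ws
  proof -
    have cnt: "count_list ws i = 1" using assms(3) r by simp
    obtain a b where ab: "ws = a @ [i] @ b" "i \<notin> set a" "i \<notin> set b"
      using split_once[OF cnt] by blast
    have "is_word n ws" "word_perm ws = w" using r unfolding reduced_word_def by blast+
    then have wab: "is_word n a" "is_word n b" "word_perm (a @ [i] @ b) = w"
      using ab(1) by simp_all
    have rm: "removeAll i ws = a @ b" using ab by simp
    have red: "is_reduced n (a @ b)"
      by (rule part1[OF i ab(2) ab(3)]) (use r ab(1) wab(3) ng in \<open>simp_all add: is_reduced_def\<close>)
    obtain p q where pq: "c1 n i w p q" "word_perm (a @ b) = w \<circ> transpose p q"
      using decomp_v[OF i ab(2,3) wab(1,2)] wab(3) by auto
    note c' = pq(1)[unfolded c1_def]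
    have "P = p" unfolding P_def
    proof (rule the_equality)
      show "1 \<le> p \<and> p \<le> i \<and> i < w p" using c' by simp
      fix pa assume h: "1 \<le> pa \<and> pa \<le> i \<and> i < w pa"
      show "pa = p"
      proof (rule ccontr)
        assume "pa \<noteq> p"
        then have "w pa \<le> i" using c' h by blast
        then show False using h by simp
      qed
    qed
    moreover have "Q = q" unfolding Q_def
    proof (rule the_equality)
      show "i < q \<and> q \<le> n \<and> w q \<le> i" using c' by simp
      fix qa assume h: "i < qa \<and> qa \<le> n \<and> w qa \<le> i"
      show "qa = q"
      proof (rule ccontr)
        assume "qa \<noteq> q"
        then have "i < w qa" using c' h by blast
        then show False using h by simp
      qed
    qed
    ultimately show ?thesis using red pq rm by simp
  qed
  show ?thesis
  proof
    show "\<forall>ws. reduced_word n w ws \<longrightarrow> is_reduced n (removeAll i ws)" using key by blast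
    show "\<exists>v. \<forall>ws. reduced_word n w ws \<longrightarrow> reduced_word n v (removeAll i ws)"
      using key unfolding is_reduced_def by metis
  qed
qed

end
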